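(* Let $K$ be such that $A+BK$ is Schur stable, and let $\mathcal{S}=\{\sigma\in\mathbf{C}: A+(1-\sigma)LC \text{ is Schur stable}\}$ be the consensus region. Let $\mathcal{G}\in\Gamma_N$ with eigenvalues $1,\lambda_2,\dots,\lambda_N$ of $\mathcal{D}$, where $|\lambda_i|<1$ for $i\ge2$. If $\lambda_i\in\mathcal{S}$ for all $i=2,\dots,N$, then the agents reach consensus under the protocol: for all initial conditions, $\|x_i(k)-x_j(k)\|\to0$ for all $i,j$.
   Context: Agents: $x_i(k+1)=Ax_i(k)+Bu_i(k)$, $y_i=Cx_i$, $i=1,\dots,N$, with $A\in\mathbf{R}^{n\times n}$, $B\in\mathbf{R}^{n\times p}$, $C\in\mathbf{R}^{q\times n}$. For a directed graph $\mathcal{G}$ on nodes $\{1,\dots,N\}$, its row-stochastic matrix $\mathcal{D}=(d_{ij})$ satisfies $d_{ii}>0$, $d_{ij}>0$ for $j\ne i$ iff $(j,i)$ is an edge, $d_{ij}=0$ otherwise, $\sum_jd_{ij}=1$. $\Gamma_N$ is the set of directed graphs on $N$ nodes containing a directed spanning tree. Protocol with $K\in\mathbf{R}^{p\times n}$, $L\in\mathbf{R}^{n\times q}$: $\zeta_i=\sum_j d_{ij}(y_i-y_j)$, $v_i(k+1)=(A+BK)v_i(k)+L\big(\sum_j d_{ij}C(v_i-v_j)-\zeta_i\big)$, $u_i=Kv_i$. Schur stable: all eigenvalues of modulus $<1$. *)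

theory Defs
  imports Complex_Main "Jordan_Normal_Form.Char_Poly"
begin

definition schur_stable :: "complex mat \<Rightarrow> bool" where
  "schur_stable M \<longleftrightarrow> M \<in> carrier_mat (dim_row M) (dim_row M) \<and>
     (\<forall>z. eigenvalue M z \<longrightarrow> cmod z < 1)"

abbreviation cmat :: "real mat \<Rightarrow> complex mat" where
  "cmat M \<equiv> map_mat complex_of_real M"

(* row-stochastic matrix of a digraph on nodes 0..N-1 (agents 1..N of the paper) *)
definition row_stochastic :: "nat \<Rightarrow> real mat \<Rightarrow> bool" where
  "row_stochastic N D \<longleftrightarrow> D \<in> carrier_mat N N \<and>
     (\<forall>i<N. D $$ (i,i) > 0) \<and> (\<forall>i<N. \<forall>j<N. D $$ (i,j) \<ge> 0) \<and>
     (\<forall>i<N. (\<Sum>j<N. D $$ (i,j)) = 1)"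

definition graph_edges :: "nat \<Rightarrow> real mat \<Rightarrow> (nat \<times> nat) set" where
  "graph_edges N D = {(j,i). i < N \<and> j < N \<and> j \<noteq> i \<and> D $$ (i,j) > 0}"

definition has_spanning_tree :: "nat \<Rightarrow> real mat \<Rightarrow> bool" where
  "has_spanning_tree N D \<longleftrightarrow> (\<exists>r<N. \<forall>i<N. (r,i) \<in> (graph_edges N D)\<^sup>*)"

definition consensus_region :: "real mat \<Rightarrow> real mat \<Rightarrow> real mat \<Rightarrow> complex set" where
  "consensus_region A L C = {\<sigma>. schur_stable (cmat A + (1 - \<sigma>) \<cdot>\<^sub>m (cmat L * cmat C))}"

definition vsum :: "nat \<Rightarrow> nat \<Rightarrow> (nat \<Rightarrow> real vec) \<Rightarrow> real vec" where
  "vsum d N f = vec d (\<lambda>l. \<Sum>j<N. f j $ l)"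

definition vnorm :: "real vec \<Rightarrow> real" where
  "vnorm x = sqrt (\<Sum>l<dim_vec x. (x $ l)\<^sup>2)"

end

theory Submission
  imports Defs "Jordan_Normal_Form.Spectral_Radius" "Jordan_Normal_Form.Schur_Decomposition"
begin


lemma scalar_decay:
  fixes z b :: "nat \<Rightarrow> real" and \<rho> :: real
  assumes r0: "0 \<le> \<rho>" and r1: "\<rho> < 1" and z0: "\<forall>k. 0 \<le> z k"
    and rec: "\<forall>k. z (Suc k) \<le> \<rho> * z k + b k" and b: "b \<longlonglongrightarrow> 0"
  shows "z \<longlonglongrightarrow> 0"
proof (rule LIMSEQ_I)
  fix \<epsilon> :: real assume e: "0 < \<epsilon>"
  have e2: "0 < \<epsilon> * (1 - \<rho>) / 2" using e r1 by simp
  from LIMSEQ_D[OF b e2] obtain J where J: "\<forall>n\<ge>J. norm (b n - 0) < \<epsilon> * (1 - \<rho>) / 2" by (elim exE)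
  have ind: "z (J + t) \<le> \<rho> ^ t * z J + \<epsilon> / 2" for t
  proof (induction t)
    case 0 then show ?case using e by simp
  next
    case (Suc t)
    have bb: "b (J + t) \<le> \<epsilon> * (1 - \<rho>) / 2" using J[rule_format, of "J+t"] by auto
    have "z (J + Suc t) \<le> \<rho> * z (J + t) + b (J + t)" using rec by simp
    also have "\<dots> \<le> \<rho> * (\<rho> ^ t * z J + \<epsilon> / 2) + \<epsilon> * (1 - \<rho>) / 2"
      using Suc.IH bb r0 by (intro add_mono mult_left_mono) auto
    also have "\<dots> = \<rho> ^ Suc t * z J + \<epsilon> / 2" by (simp add: field_simps)
    finally show ?case .
  qed
  have lim: "(\<lambda>t. \<rho> ^ t * z J) \<longlonglongrightarrow> 0"
    by (rule tendsto_mult_left_zero, rule LIMSEQ_power_zero) (use r0 r1 in auto)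
  have e3: "0 < \<epsilon>/2" using e by simp
  from LIMSEQ_D[OF lim e3] obtain T where T: "\<forall>t\<ge>T. norm (\<rho> ^ t * z J - 0) < \<epsilon>/2" by (elim exE)
  show "\<exists>no. \<forall>n\<ge>no. norm (z n - 0) < \<epsilon>"
  proof (rule exI[of _ "J + T"], intro allI impI)
    fix n assume n: "J + T \<le> n"
    define t where "t = n - J"
    have t: "n = J + t" "T \<le> t" using n unfolding t_def by auto
    have "z n \<le> \<rho> ^ t * z J + \<epsilon> / 2" using ind t by simp
    moreover have "norm (\<rho> ^ t * z J - 0) < \<epsilon>/2" using T t(2) by blast
    ultimately show "norm (z n - 0) < \<epsilon>" using z0 by auto
  qed
qed

lemma pow_smult_mat: "(a \<cdot>\<^sub>m M) ^\<^sub>m k = (a ^ k) \<cdot>\<^sub>m (M ^\<^sub>m k)" if "M \<in> carrier_mat n n"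
  for M :: "'a::comm_ring_1 mat"
proof (induction k)
  case 0 then show ?case using that by (auto intro!: eq_matI)
next
  case (Suc k)
  have "a ^ k \<cdot>\<^sub>m M ^\<^sub>m k * (a \<cdot>\<^sub>m M) = a ^ k \<cdot>\<^sub>m (M ^\<^sub>m k * (a \<cdot>\<^sub>m M))"
    using that by (intro mult_smult_assoc_mat) auto
  also have "\<dots> = a ^ k \<cdot>\<^sub>m (a \<cdot>\<^sub>m (M ^\<^sub>m k * M))"
    using that by (subst mult_smult_distrib) auto
  also have "\<dots> = (a ^ Suc k) \<cdot>\<^sub>m (M ^\<^sub>m k * M)"
    by (rule eq_matI) auto
  finally show ?case by (simp add: Suc)
qed

lemma schur_decay:
  fixes M :: "complex mat"
  assumes M: "M \<in> carrier_mat n n" and st: "schur_stable M"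
  shows "\<exists>c r. 0 \<le> c \<and> 0 < r \<and> r < 1 \<and>
     (\<forall>k i j. i < n \<longrightarrow> j < n \<longrightarrow> cmod ((M ^\<^sub>m k) $$ (i,j)) \<le> c * r ^ k)"
proof (cases "n = 0")
  case True then show ?thesis by (intro exI[of _ 0] exI[of _ "1/2"]) auto
next
  case False
  hence n: "n > 0" by auto
  define \<rho> where "\<rho> = spectral_radius M"
  from spectral_radius_mem_max(1)[OF M n] obtain z0 where "eigenvalue M z0" "\<rho> = cmod z0"
    unfolding \<rho>_def spectrum_def by auto
  with st have \<rho>1: "\<rho> < 1" and \<rho>0: "0 \<le> \<rho>" unfolding schur_stable_def by auto
  define r where "r = (1 + \<rho>) / 2"
  have r0: "0 < r" and r1: "r < 1" and \<rho>r: "\<rho> < r" using \<rho>1 \<rho>0 unfolding r_def by auto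
  define M' where "M' = complex_of_real (1/r) \<cdot>\<^sub>m M"
  have M': "M' \<in> carrier_mat n n" unfolding M'_def using M by auto
  have "spectral_radius M' < 1"
  proof -
    from spectral_radius_mem_max(1)[OF M' n] obtain z where ev: "eigenvalue M' z"
      and z: "spectral_radius M' = cmod z" unfolding spectrum_def by auto
    from ev obtain v where v: "v \<in> carrier_vec n" "v \<noteq> 0\<^sub>v n" "M' *\<^sub>v v = z \<cdot>\<^sub>v v"
      unfolding eigenvalue_def eigenvector_def using M' by auto
    have "M *\<^sub>v v = (complex_of_real r * z) \<cdot>\<^sub>v v"
    proof (rule eq_vecI)
      fix i assume i: "i < dim_vec ((complex_of_real r * z) \<cdot>\<^sub>v v)"
      hence i': "i < n" using v by auto
      have "(M' *\<^sub>v v) $ i = (z \<cdot>\<^sub>v v) $ i" using v by simp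
      hence "complex_of_real (1/r) * (row M i \<bullet> v) = z * v $ i"
        using i' M v unfolding M'_def by (simp add: scalar_prod_def sum_distrib_left mult.assoc)
      hence "row M i \<bullet> v = complex_of_real r * z * v $ i" using r0
        by (simp add: field_simps)
      then show "(M *\<^sub>v v) $ i = ((complex_of_real r * z) \<cdot>\<^sub>v v) $ i" using i' M v by simp
    qed (use M v in simp)
    hence "eigenvalue M (complex_of_real r * z)" unfolding eigenvalue_def eigenvector_def
      using v M by auto
    hence "cmod (complex_of_real r * z) \<le> \<rho>"
      using spectral_radius_mem_max(2)[OF M n] unfolding \<rho>_def spectrum_def by auto
    hence "r * cmod z \<le> \<rho>" using r0 by (simp add: norm_mult)
    hence "r * cmod z < r * 1" using \<rho>r by auto
    thus ?thesis using z r0 by auto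
  qed
  from spectral_radius_jnf_norm_bound_less_1_upper_triangular[OF M' this]
  obtain c where c: "\<forall>k. norm_bound (M' ^\<^sub>m k) c" by auto
  have "\<forall>i j. i < n \<longrightarrow> j < n \<longrightarrow> cmod ((M' ^\<^sub>m 0) $$ (i,j)) \<le> c"
    using c[rule_format, of 0] M' unfolding norm_bound_def by simp
  hence "cmod ((M' ^\<^sub>m 0) $$ (0,0)) \<le> c" using n by blast
  hence c0: "0 \<le> c" by (meson norm_ge_zero order_trans)
  show ?thesis
  proof (rule exI[of _ c], rule exI[of _ r], intro conjI allI impI)
    fix k i j assume i: "i < n" and j: "j < n"
    have eq: "M' ^\<^sub>m k = complex_of_real ((1/r)^k) \<cdot>\<^sub>m (M ^\<^sub>m k)"
      unfolding M'_def pow_smult_mat[OF M] by simp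
    have "cmod ((M' ^\<^sub>m k) $$ (i,j)) \<le> c" using c[rule_format, of k] i j M'
      unfolding norm_bound_def by auto
    hence "(1/r)^k * cmod ((M ^\<^sub>m k) $$ (i,j)) \<le> c"
      using i j M r0 unfolding eq by (simp add: norm_mult norm_power norm_divide)
    hence "cmod ((M ^\<^sub>m k) $$ (i,j)) \<le> c * r^k" using r0
      by (simp add: field_simps power_divide)
    thus "cmod ((M ^\<^sub>m k) $$ (i,j)) \<le> c * r^k" .
  next
    show "0 \<le> c" by (rule c0)
  next
    show "0 < r" by (rule r0)
  next
    show "r < 1" by (rule r1)
  qed
qed


lemma pow_mat_commute: "M \<in> carrier_mat n n \<Longrightarrow> M * M ^\<^sub>m k = M ^\<^sub>m k * M"
proof (induction k)
  case 0 then show ?case by simp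
next
  case (Suc k)
  have "M * M ^\<^sub>m Suc k = (M * M ^\<^sub>m k) * M" using Suc.prems
    by (simp add: assoc_mult_mat[symmetric, of M n n "M ^\<^sub>m k" n M n])
  then show ?case using Suc by simp
qed

lemma mv_coord: "M \<in> carrier_mat n m \<Longrightarrow> v \<in> carrier_vec m \<Longrightarrow> l < n \<Longrightarrow>
  (M *\<^sub>v v) $ l = (\<Sum>j<m. M $$ (l,j) * v $ j)"
  by (simp add: scalar_prod_def atLeast0LessThan)

lemma mat_vec_bound:
  fixes X :: "complex mat"
  assumes X: "X \<in> carrier_mat n n" and v: "v \<in> carrier_vec n"
    and b: "\<forall>i j. i < n \<longrightarrow> j < n \<longrightarrow> cmod (X $$ (i,j)) \<le> a" and l: "l < n"
  shows "cmod ((X *\<^sub>v v) $ l) \<le> a * (\<Sum>j<n. cmod (v $ j))"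
proof -
  have "cmod ((X *\<^sub>v v) $ l) = cmod (\<Sum>j<n. X $$ (l,j) * v $ j)" using mv_coord[OF X v l] by simp
  also have "\<dots> \<le> (\<Sum>j<n. cmod (X $$ (l,j) * v $ j))" by (rule norm_sum)
  also have "\<dots> \<le> (\<Sum>j<n. a * cmod (v $ j))"
    by (rule sum_mono) (use b l in \<open>auto simp: norm_mult intro!: mult_right_mono\<close>)
  finally show ?thesis by (simp add: sum_distrib_left)
qed

lemma iss:
  fixes M :: "complex mat" and y u :: "nat \<Rightarrow> complex vec"
  assumes M: "M \<in> carrier_mat n n" and st: "schur_stable M"
    and y: "\<And>k. y k \<in> carrier_vec n" and u: "\<And>k. u k \<in> carrier_vec n"
    and rec: "\<And>k. y (Suc k) = M *\<^sub>v y k + u k"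
    and uc: "\<And>l. l < n \<Longrightarrow> (\<lambda>k. u k $ l) \<longlonglongrightarrow> 0"
    and l: "l < n"
  shows "(\<lambda>k. y k $ l) \<longlonglongrightarrow> 0"
proof -
  obtain c r where c0: "0 \<le> c" and r0: "0 < r" and r1: "r < 1"
    and cr: "\<And>k i j. i < n \<Longrightarrow> j < n \<Longrightarrow> cmod ((M ^\<^sub>m k) $$ (i,j)) \<le> c * r ^ k"
    using schur_decay[OF M st] by blast
  define w where "w k = vec n (\<lambda>l. \<Sum>s<k. (M ^\<^sub>m (k-1-s) *\<^sub>v u s) $ l)" for k
  have w: "w k \<in> carrier_vec n" for k unfolding w_def by simp
  have pk: "M ^\<^sub>m k *\<^sub>v v \<in> carrier_vec n" if "v \<in> carrier_vec n" for k v
    by (rule mult_mat_vec_carrier[OF pow_carrier_mat[OF M] that])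
  have rep: "y k = M ^\<^sub>m k *\<^sub>v y 0 + w k" for k
  proof (induction k)
    case 0
    show ?case using y[of 0] M by (intro eq_vecI) (auto simp: w_def)
  next
    case (Suc k)
    have "y (Suc k) = M *\<^sub>v (M ^\<^sub>m k *\<^sub>v y 0 + w k) + u k" using rec Suc by simp
    also have "\<dots> = M ^\<^sub>m Suc k *\<^sub>v y 0 + w (Suc k)"
    proof (rule eq_vecI)
      fix l assume "l < dim_vec (M ^\<^sub>m Suc k *\<^sub>v y 0 + w (Suc k))"
      hence l: "l < n" using M by (simp add: w_def)
      have e1: "M *\<^sub>v (M ^\<^sub>m k *\<^sub>v y 0 + w k) = M *\<^sub>v (M ^\<^sub>m k *\<^sub>v y 0) + M *\<^sub>v w k"
        using M y[of 0] w pk[OF y[of 0]] by (intro mult_add_distrib_mat_vec) auto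
      have e2: "M *\<^sub>v (M ^\<^sub>m k *\<^sub>v y 0) = M ^\<^sub>m Suc k *\<^sub>v y 0"
      proof -
        have "M *\<^sub>v (M ^\<^sub>m k *\<^sub>v y 0) = (M * M ^\<^sub>m k) *\<^sub>v y 0"
          using M y[of 0] by (intro assoc_mult_mat_vec[symmetric]) auto
        thus ?thesis using pow_mat_commute[OF M] by simp
      qed
      have e3: "(M *\<^sub>v w k) $ l = (\<Sum>s<k. (M ^\<^sub>m (k-s) *\<^sub>v u s) $ l)"
      proof -
        have "(M *\<^sub>v w k) $ l = (\<Sum>j<n. M $$ (l,j) * (\<Sum>s<k. (M ^\<^sub>m (k-1-s) *\<^sub>v u s) $ j))"
          using mv_coord[OF M w l] by (simp add: w_def)
        also have "\<dots> = (\<Sum>s<k. \<Sum>j<n. M $$ (l,j) * (M ^\<^sub>m (k-1-s) *\<^sub>v u s) $ j)"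
          by (simp add: sum_distrib_left sum.swap[of _ "{..<n}"])
        also have "\<dots> = (\<Sum>s<k. (M *\<^sub>v (M ^\<^sub>m (k-1-s) *\<^sub>v u s)) $ l)"
          by (rule sum.cong[OF refl], subst mv_coord[OF M _ l]) (use M u pk[OF u] in auto)
        also have "\<dots> = (\<Sum>s<k. (M ^\<^sub>m (k-s) *\<^sub>v u s) $ l)"
        proof (rule sum.cong[OF refl])
          fix s assume s: "s \<in> {..<k}"
          have "M *\<^sub>v (M ^\<^sub>m (k-1-s) *\<^sub>v u s) = (M * M ^\<^sub>m (k-1-s)) *\<^sub>v u s"
            using M u[of s] by (intro assoc_mult_mat_vec[symmetric]) auto
          also have "\<dots> = M ^\<^sub>m Suc (k-1-s) *\<^sub>v u s" using pow_mat_commute[OF M] by simp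
          also have "Suc (k-1-s) = k - s" using s by auto
          finally show "(M *\<^sub>v (M ^\<^sub>m (k-1-s) *\<^sub>v u s)) $ l = (M ^\<^sub>m (k-s) *\<^sub>v u s) $ l" by simp
        qed
        finally show ?thesis .
      qed
      have e4: "w (Suc k) $ l = (\<Sum>s<k. (M ^\<^sub>m (k-s) *\<^sub>v u s) $ l) + u k $ l"
      proof -
        have "(M ^\<^sub>m 0 *\<^sub>v u k) $ l = u k $ l" using M u[of k] l by simp
        thus ?thesis using l by (simp add: w_def)
      qed
      show "(M *\<^sub>v (M ^\<^sub>m k *\<^sub>v y 0 + w k) + u k) $ l = (M ^\<^sub>m Suc k *\<^sub>v y 0 + w (Suc k)) $ l"
        unfolding e1 using l M y[of 0] w[of k] u[of k] w[of "Suc k"] e2 e3 e4 pk[OF y[of 0], of "Suc k"] by simp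
    qed (use M u[of k] in \<open>simp add: w_def\<close>)
    finally show ?case .
  qed
  define b where "b k = (\<Sum>j<n. cmod (u k $ j))" for k
  define Y0 where "Y0 = (\<Sum>j<n. cmod (y 0 $ j))"
  define z where "z k = (\<Sum>s<k. r ^ (k-1-s) * b s)" for k
  have b0: "0 \<le> b k" for k unfolding b_def by (simp add: sum_nonneg)
  have z0: "\<forall>k. 0 \<le> z k" unfolding z_def using b0 r0 by (auto intro!: sum_nonneg)
  have blim: "b \<longlonglongrightarrow> 0" unfolding b_def
    by (rule tendsto_null_sum, rule tendsto_norm_zero, rule uc) auto
  have zrec: "\<forall>k. z (Suc k) \<le> r * z k + b k"
  proof
    fix k
    have "r * z k = (\<Sum>s<k. r ^ (k-s) * b s)" unfolding z_def sum_distrib_left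
    proof (rule sum.cong[OF refl])
      fix s assume "s \<in> {..<k}"
      hence "k - s = Suc (k-1-s)" by auto
      thus "r * (r ^ (k - 1 - s) * b s) = r ^ (k - s) * b s" by simp
    qed
    thus "z (Suc k) \<le> r * z k + b k" unfolding z_def by simp
  qed
  have zlim: "z \<longlonglongrightarrow> 0" by (rule scalar_decay[OF _ r1 z0 zrec blim]) (use r0 in simp)
  have bnd: "cmod (y k $ l) \<le> c * r ^ k * Y0 + c * z k" for k
  proof -
    have eq0: "y k $ l = (M ^\<^sub>m k *\<^sub>v y 0) $ l + w k $ l" using rep[of k] l M y[of 0] w[of k]
      using pk[OF y[of 0], of k] by simp
    have eqw: "w k $ l = (\<Sum>s<k. (M ^\<^sub>m (k-1-s) *\<^sub>v u s) $ l)" using l by (simp add: w_def)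
    have "cmod (y k $ l) \<le> cmod ((M ^\<^sub>m k *\<^sub>v y 0) $ l) + cmod (\<Sum>s<k. (M ^\<^sub>m (k-1-s) *\<^sub>v u s) $ l)"
      unfolding eq0 eqw by (rule norm_triangle_ineq)
    also have "\<dots> \<le> cmod ((M ^\<^sub>m k *\<^sub>v y 0) $ l) + (\<Sum>s<k. cmod ((M ^\<^sub>m (k-1-s) *\<^sub>v u s) $ l))"
      by (rule add_left_mono, rule norm_sum)
    also have "\<dots> \<le> c * r ^ k * Y0 + (\<Sum>s<k. c * r ^ (k-1-s) * b s)"
    proof (rule add_mono)
      show "cmod ((M ^\<^sub>m k *\<^sub>v y 0) $ l) \<le> c * r ^ k * Y0" unfolding Y0_def
        by (rule mat_vec_bound) (use M y[of 0] cr l in auto)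
      show "(\<Sum>s<k. cmod ((M ^\<^sub>m (k-1-s) *\<^sub>v u s) $ l)) \<le> (\<Sum>s<k. c * r ^ (k-1-s) * b s)"
        by (rule sum_mono, unfold b_def, rule mat_vec_bound) (use M u cr l in auto)
    qed
    finally show ?thesis unfolding z_def by (simp add: sum_distrib_left mult.assoc)
  qed
  have glim: "(\<lambda>k. c * r ^ k * Y0 + c * z k) \<longlonglongrightarrow> 0"
  proof -
    have "(\<lambda>k. r ^ k) \<longlonglongrightarrow> 0" by (rule LIMSEQ_power_zero) (use r0 r1 in auto)
    hence "(\<lambda>k. c * r ^ k * Y0) \<longlonglongrightarrow> 0"
      by (intro tendsto_mult_left_zero tendsto_mult_right_zero)
    moreover have "(\<lambda>k. c * z k) \<longlonglongrightarrow> 0" by (intro tendsto_mult_right_zero zlim)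
    ultimately show ?thesis by (rule tendsto_add_zero)
  qed
  show ?thesis
  proof (rule tendsto_0_le[OF glim, of _ 1])
    show "\<forall>\<^sub>F k in sequentially. norm (y k $ l) \<le> norm (c * r ^ k * Y0 + c * z k) * 1"
    proof (rule always_eventually, rule allI)
      fix k
      have "0 \<le> c * r ^ k * Y0 + c * z k" using c0 r0 z0 unfolding Y0_def
        by (intro add_nonneg_nonneg mult_nonneg_nonneg sum_nonneg) auto
      thus "norm (y k $ l) \<le> norm (c * r ^ k * Y0 + c * z k) * 1" using bnd[of k] by simp
    qed
  qed
qed



lemma key_sum:
  fixes Q T :: "complex mat" and D :: "real mat" and e :: "nat \<Rightarrow> real"
  assumes QD: "\<And>m j. m < N \<Longrightarrow> j < N \<Longrightarrow>
      (\<Sum>i<N. Q $$ (m,i) * complex_of_real (D $$ (i,j))) = (\<Sum>l<N. T $$ (m,l) * Q $$ (l,j))"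
    and rs: "\<And>i. i < N \<Longrightarrow> (\<Sum>j<N. D $$ (i,j)) = 1"
    and ut: "\<And>m l. l < m \<Longrightarrow> m < N \<Longrightarrow> T $$ (m,l) = 0"
    and m: "m < N"
  shows "(\<Sum>i<N. Q $$ (m,i) * complex_of_real (\<Sum>j<N. D $$ (i,j) * (e i - e j)))
    = (1 - T $$ (m,m)) * (\<Sum>i<N. Q $$ (m,i) * complex_of_real (e i))
      - (\<Sum>l\<in>{m<..<N}. T $$ (m,l) * (\<Sum>i<N. Q $$ (l,i) * complex_of_real (e i)))"
proof -
  define F where "F l = (\<Sum>i<N. Q $$ (l,i) * complex_of_real (e i))" for l
  have inner: "(\<Sum>j<N. D $$ (i,j) * (e i - e j)) = e i - (\<Sum>j<N. D $$ (i,j) * e j)" if "i < N" for i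
  proof -
    have "(\<Sum>j<N. D $$ (i,j) * (e i - e j)) = e i * (\<Sum>j<N. D $$ (i,j)) - (\<Sum>j<N. D $$ (i,j) * e j)"
      by (simp add: sum_subtractf sum_distrib_left algebra_simps)
    thus ?thesis using rs[OF that] by simp
  qed
  have "(\<Sum>i<N. Q $$ (m,i) * complex_of_real (\<Sum>j<N. D $$ (i,j) * (e i - e j)))
     = (\<Sum>i<N. Q $$ (m,i) * complex_of_real (e i)) - (\<Sum>i<N. \<Sum>j<N. Q $$ (m,i) * complex_of_real (D $$ (i,j)) * complex_of_real (e j))"
  proof -
    have "(\<Sum>i<N. Q $$ (m,i) * complex_of_real (\<Sum>j<N. D $$ (i,j) * (e i - e j)))
      = (\<Sum>i<N. Q $$ (m,i) * complex_of_real (e i) - (\<Sum>j<N. Q $$ (m,i) * complex_of_real (D $$ (i,j)) * complex_of_real (e j)))"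
    proof (rule sum.cong[OF refl])
      fix i assume "i \<in> {..<N}"
      hence "(\<Sum>j<N. D $$ (i,j) * (e i - e j)) = e i - (\<Sum>j<N. D $$ (i,j) * e j)" using inner by simp
      thus "Q $$ (m,i) * complex_of_real (\<Sum>j<N. D $$ (i,j) * (e i - e j))
        = Q $$ (m,i) * complex_of_real (e i) - (\<Sum>j<N. Q $$ (m,i) * complex_of_real (D $$ (i,j)) * complex_of_real (e j))"
        by (simp only:) (simp add: right_diff_distrib sum_distrib_left mult.assoc)
    qed
    thus ?thesis by (simp only: sum_subtractf)
  qed
  also have "(\<Sum>i<N. \<Sum>j<N. Q $$ (m,i) * complex_of_real (D $$ (i,j)) * complex_of_real (e j))
     = (\<Sum>j<N. (\<Sum>i<N. Q $$ (m,i) * complex_of_real (D $$ (i,j))) * complex_of_real (e j))"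
    by (subst sum.swap) (simp add: sum_distrib_right)
  also have "\<dots> = (\<Sum>j<N. (\<Sum>l<N. T $$ (m,l) * Q $$ (l,j)) * complex_of_real (e j))"
    using QD m by simp
  also have "\<dots> = (\<Sum>l<N. T $$ (m,l) * F l)"
    unfolding F_def by (simp add: sum_distrib_right sum_distrib_left mult.assoc, rule sum.swap)
  also have "\<dots> = T $$ (m,m) * F m + (\<Sum>l\<in>{m<..<N}. T $$ (m,l) * F l)"
  proof -
    have split: "{..<N} = {..<m} \<union> ({m} \<union> {m<..<N})" using m by auto
    have "(\<Sum>l<N. T $$ (m,l) * F l) = (\<Sum>l<m. T $$ (m,l) * F l) + (T $$ (m,m) * F m + (\<Sum>l\<in>{m<..<N}. T $$ (m,l) * F l))"
      unfolding split by (subst sum.union_disjoint, auto)+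
    moreover have "(\<Sum>l<m. T $$ (m,l) * F l) = 0" using ut m by simp
    ultimately show ?thesis by simp
  qed
  finally show ?thesis unfolding F_def[symmetric] by (simp add: algebra_simps)
qed


lemma err_rec:
  fixes A B C K L D :: "real mat" and x v :: "nat \<Rightarrow> nat \<Rightarrow> real vec"
  assumes A: "A \<in> carrier_mat n n" and B: "B \<in> carrier_mat n p"
    and C: "C \<in> carrier_mat q n" and K: "K \<in> carrier_mat p n"
    and L: "L \<in> carrier_mat n q"
    and xc: "\<And>i k. i < N \<Longrightarrow> x i k \<in> carrier_vec n"
    and vc: "\<And>i k. i < N \<Longrightarrow> v i k \<in> carrier_vec n"
    and xr: "\<And>i k. i < N \<Longrightarrow> x i (Suc k) = A *\<^sub>v x i k + B *\<^sub>v (K *\<^sub>v v i k)"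
    and vr: "\<And>i k. i < N \<Longrightarrow> v i (Suc k) =
        (A + B * K) *\<^sub>v v i k
        + L *\<^sub>v (vsum q N (\<lambda>j. D $$ (i,j) \<cdot>\<^sub>v (C *\<^sub>v (v i k - v j k)))
                 - vsum q N (\<lambda>j. D $$ (i,j) \<cdot>\<^sub>v (C *\<^sub>v x i k - C *\<^sub>v x j k)))"
    and i: "i < N" and s: "s < n"
  shows "v i (Suc k) $ s - x i (Suc k) $ s = (\<Sum>t<n. A $$ (s,t) * (v i k $ t - x i k $ t))
     + (\<Sum>t<n. (L * C) $$ (s,t) * (\<Sum>j<N. D $$ (i,j) * ((v i k $ t - x i k $ t) - (v j k $ t - x j k $ t))))"
proof -
  define vs1 where "vs1 = vsum q N (\<lambda>j. D $$ (i,j) \<cdot>\<^sub>v (C *\<^sub>v (v i k - v j k)))"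
  define vs2 where "vs2 = vsum q N (\<lambda>j. D $$ (i,j) \<cdot>\<^sub>v (C *\<^sub>v x i k - C *\<^sub>v x j k))"
  define W where "W = vec n (\<lambda>t. \<Sum>j<N. D $$ (i,j) * ((v i k $ t - x i k $ t) - (v j k $ t - x j k $ t)))"
  have vi: "v i k \<in> carrier_vec n" and xi: "x i k \<in> carrier_vec n" using vc xc i by auto
  have W: "W \<in> carrier_vec n" unfolding W_def by simp
  have vs: "vs1 - vs2 = C *\<^sub>v W"
  proof (rule eq_vecI)
    fix r assume "r < dim_vec (C *\<^sub>v W)"
    hence r: "r < q" using C by simp
    have l1: "vs1 $ r = (\<Sum>j<N. D $$ (i,j) * (\<Sum>t<n. C $$ (r,t) * (v i k $ t - v j k $ t)))"
    proof -
      have "vs1 $ r = (\<Sum>j<N. (D $$ (i,j) \<cdot>\<^sub>v (C *\<^sub>v (v i k - v j k))) $ r)"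
        unfolding vs1_def vsum_def using r by simp
      also have "\<dots> = (\<Sum>j<N. D $$ (i,j) * (\<Sum>t<n. C $$ (r,t) * (v i k $ t - v j k $ t)))"
      proof (rule sum.cong[OF refl])
        fix j assume "j \<in> {..<N}"
        hence vj: "v j k \<in> carrier_vec n" using vc by auto
        have d: "v i k - v j k \<in> carrier_vec n" using vi vj by simp
        show "(D $$ (i,j) \<cdot>\<^sub>v (C *\<^sub>v (v i k - v j k))) $ r = D $$ (i,j) * (\<Sum>t<n. C $$ (r,t) * (v i k $ t - v j k $ t))"
          using r C d mv_coord[OF C d r] vi vj by simp
      qed
      finally show ?thesis .
    qed
    have l2: "vs2 $ r = (\<Sum>j<N. D $$ (i,j) * ((\<Sum>t<n. C $$ (r,t) * x i k $ t) - (\<Sum>t<n. C $$ (r,t) * x j k $ t)))"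
    proof -
      have "vs2 $ r = (\<Sum>j<N. (D $$ (i,j) \<cdot>\<^sub>v (C *\<^sub>v x i k - C *\<^sub>v x j k)) $ r)"
        unfolding vs2_def vsum_def using r by simp
      also have "\<dots> = (\<Sum>j<N. D $$ (i,j) * ((\<Sum>t<n. C $$ (r,t) * x i k $ t) - (\<Sum>t<n. C $$ (r,t) * x j k $ t)))"
      proof (rule sum.cong[OF refl])
        fix j assume "j \<in> {..<N}"
        hence xj: "x j k \<in> carrier_vec n" using xc by auto
        show "(D $$ (i,j) \<cdot>\<^sub>v (C *\<^sub>v x i k - C *\<^sub>v x j k)) $ r = D $$ (i,j) * ((\<Sum>t<n. C $$ (r,t) * x i k $ t) - (\<Sum>t<n. C $$ (r,t) * x j k $ t))"
          using r C mv_coord[OF C xi r] mv_coord[OF C xj r] xi xj by simp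
      qed
      finally show ?thesis .
    qed
    have rr: "(C *\<^sub>v W) $ r = (\<Sum>t<n. C $$ (r,t) * W $ t)" by (rule mv_coord[OF C W r])
    have "(C *\<^sub>v W) $ r = (\<Sum>t<n. \<Sum>j<N. C $$ (r,t) * (D $$ (i,j) * ((v i k $ t - x i k $ t) - (v j k $ t - x j k $ t))))"
      unfolding rr unfolding W_def by (simp add: sum_distrib_left)
    also have "\<dots> = (\<Sum>j<N. \<Sum>t<n. C $$ (r,t) * (D $$ (i,j) * ((v i k $ t - x i k $ t) - (v j k $ t - x j k $ t))))"
      by (rule sum.swap)
    also have "\<dots> = (\<Sum>j<N. D $$ (i,j) * (\<Sum>t<n. C $$ (r,t) * (v i k $ t - v j k $ t))
        - D $$ (i,j) * ((\<Sum>t<n. C $$ (r,t) * x i k $ t) - (\<Sum>t<n. C $$ (r,t) * x j k $ t)))"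
      by (rule sum.cong[OF refl]) (simp add: sum_distrib_left sum_subtractf[symmetric] algebra_simps)
    also have "\<dots> = vs1 $ r - vs2 $ r" unfolding l1 l2 by (simp only: sum_subtractf)
    finally show "(vs1 - vs2) $ r = (C *\<^sub>v W) $ r" using r by (simp add: vs1_def vs2_def vsum_def)
  qed (use C in \<open>simp add: vs1_def vs2_def vsum_def\<close>)
  have LC: "L *\<^sub>v (vs1 - vs2) = (L * C) *\<^sub>v W" unfolding vs using L C W by simp
  have LCc: "L * C \<in> carrier_mat n n" using L C by simp
  have dims: "dim_row A = n" "dim_row B = n" "dim_row L = n" "dim_col L = q" "dim_row C = q" "dim_col C = n"
    "dim_row K = p" "dim_col K = n" "dim_col A = n" "dim_col B = p" using A B L C K by auto
  have e1: "v i (Suc k) $ s = (A *\<^sub>v v i k) $ s + (B *\<^sub>v (K *\<^sub>v v i k)) $ s + ((L * C) *\<^sub>v W) $ s"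
  proof -
    have "(A + B * K) *\<^sub>v v i k = A *\<^sub>v v i k + (B * K) *\<^sub>v v i k"
      using A B K vi by (intro add_mult_distrib_mat_vec) auto
    moreover have "(B * K) *\<^sub>v v i k = B *\<^sub>v (K *\<^sub>v v i k)" using B K vi by simp
    ultimately show ?thesis using vr[OF i, of k] LC s A B K vi W LCc
      unfolding vs1_def[symmetric] vs2_def[symmetric] by (simp add: dims)
  qed
  have e2: "x i (Suc k) $ s = (A *\<^sub>v x i k) $ s + (B *\<^sub>v (K *\<^sub>v v i k)) $ s"
    using xr[OF i, of k] s A B K vi xi by (simp add: dims)
  have e3: "(A *\<^sub>v v i k) $ s - (A *\<^sub>v x i k) $ s = (\<Sum>t<n. A $$ (s,t) * (v i k $ t - x i k $ t))"
    unfolding mv_coord[OF A vi s] mv_coord[OF A xi s] by (simp add: sum_subtractf right_diff_distrib)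
  have e4: "((L * C) *\<^sub>v W) $ s = (\<Sum>t<n. (L * C) $$ (s,t) * (\<Sum>j<N. D $$ (i,j) * ((v i k $ t - x i k $ t) - (v j k $ t - x j k $ t))))"
    unfolding mv_coord[OF LCc W s] unfolding W_def by simp
  show ?thesis unfolding e1 e2 e4 e3[symmetric] by simp
qed


theorem corollary1:
  fixes n p q N :: nat
    and A B C K L D :: "real mat"
    and lams :: "complex list"
  assumes A: "A \<in> carrier_mat n n" and B: "B \<in> carrier_mat n p"
    and C: "C \<in> carrier_mat q n" and K: "K \<in> carrier_mat p n"
    and L: "L \<in> carrier_mat n q"
    and stabK: "schur_stable (cmat (A + B * K))"
    and D: "row_stochastic N D" and G: "has_spanning_tree N D"
    and eigs: "char_poly (cmat D) = [:-1, 1:] * (\<Prod>z\<leftarrow>lams. [:-z, 1:])"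
    and eigs_lt: "\<forall>z\<in>set lams. cmod z < 1"
    and inS: "\<forall>z\<in>set lams. z \<in> consensus_region A L C"
  shows "\<forall>x v :: nat \<Rightarrow> nat \<Rightarrow> real vec.
     (\<forall>i<N. \<forall>k. x i k \<in> carrier_vec n \<and> v i k \<in> carrier_vec n) \<and>
     (\<forall>i<N. \<forall>k. x i (Suc k) = A *\<^sub>v x i k + B *\<^sub>v (K *\<^sub>v v i k)) \<and>
     (\<forall>i<N. \<forall>k. v i (Suc k) =
        (A + B * K) *\<^sub>v v i k
        + L *\<^sub>v (vsum q N (\<lambda>j. D $$ (i,j) \<cdot>\<^sub>v (C *\<^sub>v (v i k - v j k)))
                 - vsum q N (\<lambda>j. D $$ (i,j) \<cdot>\<^sub>v (C *\<^sub>v x i k - C *\<^sub>v x j k))))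
     \<longrightarrow> (\<forall>i<N. \<forall>j<N. (\<lambda>k. vnorm (x i k - x j k)) \<longlonglongrightarrow> 0)"
proof (rule allI, rule allI, rule impI)
  fix x v :: "nat \<Rightarrow> nat \<Rightarrow> real vec"
  assume H: "(\<forall>i<N. \<forall>k. x i k \<in> carrier_vec n \<and> v i k \<in> carrier_vec n) \<and>
     (\<forall>i<N. \<forall>k. x i (Suc k) = A *\<^sub>v x i k + B *\<^sub>v (K *\<^sub>v v i k)) \<and>
     (\<forall>i<N. \<forall>k. v i (Suc k) =
        (A + B * K) *\<^sub>v v i k
        + L *\<^sub>v (vsum q N (\<lambda>j. D $$ (i,j) \<cdot>\<^sub>v (C *\<^sub>v (v i k - v j k)))
                 - vsum q N (\<lambda>j. D $$ (i,j) \<cdot>\<^sub>v (C *\<^sub>v x i k - C *\<^sub>v x j k))))"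
  have xc: "\<And>i k. i < N \<Longrightarrow> x i k \<in> carrier_vec n" using H by blast
  have vc: "\<And>i k. i < N \<Longrightarrow> v i k \<in> carrier_vec n" using H by blast
  have xr: "\<And>i k. i < N \<Longrightarrow> x i (Suc k) = A *\<^sub>v x i k + B *\<^sub>v (K *\<^sub>v v i k)" using H by blast
  have vr: "\<And>i k. i < N \<Longrightarrow> v i (Suc k) =
        (A + B * K) *\<^sub>v v i k
        + L *\<^sub>v (vsum q N (\<lambda>j. D $$ (i,j) \<cdot>\<^sub>v (C *\<^sub>v (v i k - v j k)))
                 - vsum q N (\<lambda>j. D $$ (i,j) \<cdot>\<^sub>v (C *\<^sub>v x i k - C *\<^sub>v x j k)))" using H by blast
  define e where "e i k s = v i k $ s - x i k $ s" for i k s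
  have erec: "e i (Suc k) s = (\<Sum>t<n. A $$ (s,t) * e i k t)
     + (\<Sum>t<n. (L * C) $$ (s,t) * (\<Sum>j<N. D $$ (i,j) * (e i k t - e j k t)))" if "i < N" "s < n" for i k s
    unfolding e_def by (rule err_rec[where x=x and v=v and D=D and N=N, OF A B C K L xc vc xr vr that])
  have DN: "D \<in> carrier_mat N N" and rs: "\<And>i. i < N \<Longrightarrow> (\<Sum>j<N. D $$ (i,j)) = 1"
    using D unfolding row_stochastic_def by auto
  define Dc where "Dc = cmat D"
  have Dc: "Dc \<in> carrier_mat N N" unfolding Dc_def using DN by simp
  have cp: "char_poly Dc = (\<Prod>a\<leftarrow>(1 # lams). [:-a, 1:])" using eigs unfolding Dc_def by simp
  obtain T P Q where sd: "schur_decomposition Dc (1 # lams) = (T,P,Q)" by (cases "schur_decomposition Dc (1 # lams)") auto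
  from schur_decomposition[OF Dc cp sd] have sim: "similar_mat_wit Dc T P Q"
    and ut: "upper_triangular T" and dg: "diag_mat T = 1 # lams" by auto
  from sim Dc have T: "T \<in> carrier_mat N N" and P: "P \<in> carrier_mat N N" and Q: "Q \<in> carrier_mat N N"
    and PQ: "P * Q = 1\<^sub>m N" and QP: "Q * P = 1\<^sub>m N" and DPTQ: "Dc = P * T * Q"
    unfolding similar_mat_wit_def Let_def by auto
  have Nlen: "N = Suc (length lams)"
  proof -
    have "length (diag_mat T) = N" using T unfolding diag_mat_def by simp
    thus ?thesis using dg by simp
  qed
  have diagT: "T $$ (m,m) = (1 # lams) ! m" if "m < N" for m
  proof -
    have "diag_mat T ! m = T $$ (m,m)" using T that unfolding diag_mat_def by simp
    thus ?thesis using dg by simp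
  qed
  have Tm: "T $$ (m,m) = lams ! (m - 1)" and Tmin: "lams ! (m - 1) \<in> set lams"
    if m1: "1 \<le> m" and m2: "m < N" for m
  proof -
    obtain m' where m': "m = Suc m'" using m1 by (cases m) auto
    show "T $$ (m,m) = lams ! (m - 1)" using diagT[OF m2] m' by simp
    show "lams ! (m - 1) \<in> set lams" using m2 Nlen m' by simp
  qed
  have Tne1: "T $$ (m,m) \<noteq> 1" if "1 \<le> m" "m < N" for m
    using Tm[OF that] Tmin[OF that] eigs_lt by auto
  have ut': "T $$ (m,l) = 0" if "l < m" "m < N" for m l
    by (rule upper_triangularD[OF ut]) (use T that in auto)
  have QD: "(\<Sum>i<N. Q $$ (m,i) * complex_of_real (D $$ (i,j))) = (\<Sum>l<N. T $$ (m,l) * Q $$ (l,j))"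
    if "m < N" "j < N" for m j
  proof -
    have a1: "Q * (P * T * Q) = Q * (P * T) * Q"
      using assoc_mult_mat[OF Q mult_carrier_mat[OF P T] Q] by simp
    have a2: "Q * (P * T) = Q * P * T" using assoc_mult_mat[OF Q P T] by simp
    have "Q * Dc = (Q * P) * T * Q" unfolding DPTQ a1 a2 by simp
    also have "\<dots> = T * Q" using QP T Q by simp
    finally have "(Q * Dc) $$ (m,j) = (T * Q) $$ (m,j)" by simp
    thus ?thesis using that Q T Dc unfolding Dc_def
      by (simp add: scalar_prod_def atLeast0LessThan)
  qed
  have PQe: "(\<Sum>l<N. P $$ (i,l) * Q $$ (l,j)) = (if i = j then 1 else 0)" if "i < N" "j < N" for i j
  proof -
    have "(P * Q) $$ (i,j) = (1\<^sub>m N :: complex mat) $$ (i,j)" using PQ by simp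
    thus ?thesis using that P Q by (simp add: scalar_prod_def atLeast0LessThan)
  qed
  have N0: "0 < N" using Nlen by simp
  (* the first column of P is constant *)
  define wv where "wv l = (\<Sum>j<N. Q $$ (l,j))" for l
  have Tw: "(\<Sum>l'<N. T $$ (l,l') * wv l') = wv l" if l: "l < N" for l
  proof -
    have "(\<Sum>l'<N. T $$ (l,l') * wv l') = (\<Sum>j<N. \<Sum>l'<N. T $$ (l,l') * Q $$ (l',j))"
      unfolding wv_def by (simp add: sum_distrib_left, rule sum.swap)
    also have "\<dots> = (\<Sum>j<N. \<Sum>i<N. Q $$ (l,i) * complex_of_real (D $$ (i,j)))"
      using QD[OF l] by simp
    also have "\<dots> = (\<Sum>i<N. Q $$ (l,i) * complex_of_real (\<Sum>j<N. D $$ (i,j)))"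
      by (subst sum.swap) (simp add: sum_distrib_left)
    also have "\<dots> = wv l" unfolding wv_def by (rule sum.cong[OF refl]) (simp add: rs)
    finally show ?thesis .
  qed
  have w0: "wv m = 0" if "1 \<le> m" "m < N" for m
    using that
  proof (induction "N - m" arbitrary: m rule: less_induct)
    case less
    have z: "T $$ (m,l') * wv l' = 0" if "l' \<in> {..<N} - {m}" for l'
    proof (cases "l' < m")
      case True then show ?thesis using ut'[OF True less.prems(2)] by simp
    next
      case False
      hence "m < l'" "l' < N" using that by auto
      hence "wv l' = 0" using less.hyps[of l'] less.prems by auto
      then show ?thesis by simp
    qed
    have "(\<Sum>l'<N. T $$ (m,l') * wv l') = T $$ (m,m) * wv m + (\<Sum>l'\<in>{..<N} - {m}. T $$ (m,l') * wv l')"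
      using less.prems by (subst sum.remove[of _ m]) auto
    also have "(\<Sum>l'\<in>{..<N} - {m}. T $$ (m,l') * wv l') = 0" using z by (intro sum.neutral) blast
    finally have "T $$ (m,m) * wv m = wv m" using Tw[OF less.prems(2)] by simp
    hence "(T $$ (m,m) - 1) * wv m = 0" by (simp add: algebra_simps)
    thus "wv m = 0" using Tne1[OF less.prems] by simp
  qed
  have Pw: "P $$ (i,0) * wv 0 = 1" if i: "i < N" for i
  proof -
    have "(\<Sum>l<N. P $$ (i,l) * wv l) = (\<Sum>j<N. \<Sum>l<N. P $$ (i,l) * Q $$ (l,j))"
      unfolding wv_def by (simp add: sum_distrib_left, rule sum.swap)
    also have "\<dots> = (\<Sum>j<N. if i = j then 1 else 0)" using PQe[OF i] by simp
    also have "\<dots> = 1" using i by simp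
    finally have s1: "(\<Sum>l<N. P $$ (i,l) * wv l) = 1" .
    have "(\<Sum>l<N. P $$ (i,l) * wv l) = P $$ (i,0) * wv 0 + (\<Sum>l\<in>{..<N} - {0}. P $$ (i,l) * wv l)"
      using N0 by (subst sum.remove[of _ 0]) auto
    also have "(\<Sum>l\<in>{..<N} - {0}. P $$ (i,l) * wv l) = 0" using w0 by (intro sum.neutral) auto
    finally show ?thesis using s1 by simp
  qed
  have Pcol: "P $$ (i,0) = P $$ (j,0)" if "i < N" "j < N" for i j
  proof -
    have "P $$ (i,0) * wv 0 = P $$ (j,0) * wv 0" using Pw that by simp
    moreover have "wv 0 \<noteq> 0" using Pw[OF that(1)] by auto
    ultimately show ?thesis by simp
  qed
  define F where "F m k = vec n (\<lambda>s. \<Sum>i<N. Q $$ (m,i) * complex_of_real (e i k s))" for m k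
  define cLC where "cLC = cmat L * cmat C"
  have cLCc: "cLC \<in> carrier_mat n n" unfolding cLC_def using L C by simp
  have cLCe: "cLC $$ (s,t) = complex_of_real ((L * C) $$ (s,t))" if "s < n" "t < n" for s t
    unfolding cLC_def using that L C by (simp add: scalar_prod_def)
  have Fdim: "F m k \<in> carrier_vec n" for m k unfolding F_def by simp
  have Fi: "F m k $ s = (\<Sum>i<N. Q $$ (m,i) * complex_of_real (e i k s))" if "s < n" for m k s
    unfolding F_def using that by simp
  have Frec: "F m (Suc k) $ s = (\<Sum>t<n. (complex_of_real (A $$ (s,t)) + (1 - T $$ (m,m)) * cLC $$ (s,t)) * F m k $ t)
      - (\<Sum>t<n. cLC $$ (s,t) * (\<Sum>l\<in>{m<..<N}. T $$ (m,l) * F l k $ t))" if m: "m < N" and s: "s < n" for m k s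
  proof -
    define W where "W i t = (\<Sum>j<N. D $$ (i,j) * (e i k t - e j k t))" for i t
    have "F m (Suc k) $ s = (\<Sum>i<N. Q $$ (m,i) * complex_of_real ((\<Sum>t<n. A $$ (s,t) * e i k t) + (\<Sum>t<n. (L * C) $$ (s,t) * W i t)))"
      unfolding Fi[OF s] W_def by (rule sum.cong[OF refl]) (simp add: erec s)
    also have "\<dots> = (\<Sum>i<N. Q $$ (m,i) * complex_of_real (\<Sum>t<n. A $$ (s,t) * e i k t))
       + (\<Sum>i<N. Q $$ (m,i) * complex_of_real (\<Sum>t<n. (L * C) $$ (s,t) * W i t))"
      by (simp add: distrib_left sum.distrib)
    also have "(\<Sum>i<N. Q $$ (m,i) * complex_of_real (\<Sum>t<n. A $$ (s,t) * e i k t))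
       = (\<Sum>t<n. complex_of_real (A $$ (s,t)) * F m k $ t)"
    proof -
      have "(\<Sum>t<n. complex_of_real (A $$ (s,t)) * F m k $ t)
         = (\<Sum>t<n. \<Sum>i<N. complex_of_real (A $$ (s,t)) * (Q $$ (m,i) * complex_of_real (e i k t)))"
        by (rule sum.cong[OF refl]) (simp add: Fi sum_distrib_left)
      also have "\<dots> = (\<Sum>i<N. \<Sum>t<n. complex_of_real (A $$ (s,t)) * (Q $$ (m,i) * complex_of_real (e i k t)))"
        by (rule sum.swap)
      also have "\<dots> = (\<Sum>i<N. Q $$ (m,i) * complex_of_real (\<Sum>t<n. A $$ (s,t) * e i k t))"
        by (rule sum.cong[OF refl]) (simp add: sum_distrib_left mult_ac)
      finally show ?thesis by simp
    qed
    also have "(\<Sum>i<N. Q $$ (m,i) * complex_of_real (\<Sum>t<n. (L * C) $$ (s,t) * W i t))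
       = (\<Sum>t<n. cLC $$ (s,t) * ((1 - T $$ (m,m)) * F m k $ t - (\<Sum>l\<in>{m<..<N}. T $$ (m,l) * F l k $ t)))"
    proof -
      have "(\<Sum>t<n. cLC $$ (s,t) * ((1 - T $$ (m,m)) * F m k $ t - (\<Sum>l\<in>{m<..<N}. T $$ (m,l) * F l k $ t)))
        = (\<Sum>t<n. complex_of_real ((L * C) $$ (s,t)) * (\<Sum>i<N. Q $$ (m,i) * complex_of_real (W i t)))"
      proof (rule sum.cong[OF refl])
        fix t assume t: "t \<in> {..<n}"
        have "(\<Sum>i<N. Q $$ (m,i) * complex_of_real (W i t))
           = (1 - T $$ (m,m)) * (\<Sum>i<N. Q $$ (m,i) * complex_of_real (e i k t))
             - (\<Sum>l\<in>{m<..<N}. T $$ (m,l) * (\<Sum>i<N. Q $$ (l,i) * complex_of_real (e i k t)))"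
          unfolding W_def by (rule key_sum[OF QD rs ut' m])
        also have "\<dots> = (1 - T $$ (m,m)) * F m k $ t - (\<Sum>l\<in>{m<..<N}. T $$ (m,l) * F l k $ t)"
          using t by (simp add: Fi)
        finally show "cLC $$ (s,t) * ((1 - T $$ (m,m)) * F m k $ t - (\<Sum>l\<in>{m<..<N}. T $$ (m,l) * F l k $ t))
          = complex_of_real ((L * C) $$ (s,t)) * (\<Sum>i<N. Q $$ (m,i) * complex_of_real (W i t))"
          using cLCe[OF s] t by simp
      qed
      also have "\<dots> = (\<Sum>t<n. \<Sum>i<N. complex_of_real ((L * C) $$ (s,t)) * (Q $$ (m,i) * complex_of_real (W i t)))"
        by (simp add: sum_distrib_left)
      also have "\<dots> = (\<Sum>i<N. \<Sum>t<n. complex_of_real ((L * C) $$ (s,t)) * (Q $$ (m,i) * complex_of_real (W i t)))"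
        by (rule sum.swap)
      also have "\<dots> = (\<Sum>i<N. Q $$ (m,i) * complex_of_real (\<Sum>t<n. (L * C) $$ (s,t) * W i t))"
        by (rule sum.cong[OF refl]) (simp add: sum_distrib_left mult_ac)
      finally show ?thesis by simp
    qed
    also have "(\<Sum>t<n. complex_of_real (A $$ (s,t)) * F m k $ t)
       + (\<Sum>t<n. cLC $$ (s,t) * ((1 - T $$ (m,m)) * F m k $ t - (\<Sum>l\<in>{m<..<N}. T $$ (m,l) * F l k $ t)))
       = (\<Sum>t<n. (complex_of_real (A $$ (s,t)) + (1 - T $$ (m,m)) * cLC $$ (s,t)) * F m k $ t)
      - (\<Sum>t<n. cLC $$ (s,t) * (\<Sum>l\<in>{m<..<N}. T $$ (m,l) * F l k $ t))"
      by (simp only: sum.distrib[symmetric] sum_subtractf[symmetric]) (rule sum.cong[OF refl], simp add: algebra_simps)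
    finally show ?thesis .
  qed
  have Fconv: "(\<lambda>k. F m k $ s) \<longlonglongrightarrow> 0" if "1 \<le> m" "m < N" "s < n" for m s
    using that
  proof (induction "N - m" arbitrary: m s rule: less_induct)
    case less
    have m1: "1 \<le> m" and mN: "m < N" and s: "s < n" using less.prems by auto
    define Mm where "Mm = cmat A + (1 - T $$ (m,m)) \<cdot>\<^sub>m cLC"
    have Mm: "Mm \<in> carrier_mat n n" unfolding Mm_def using A cLCc by simp
    have st: "schur_stable Mm" using inS Tmin[OF m1 mN] Tm[OF m1 mN]
      unfolding Mm_def cLC_def consensus_region_def by auto
    have Mme: "Mm $$ (s',t) = complex_of_real (A $$ (s',t)) + (1 - T $$ (m,m)) * cLC $$ (s',t)"
      if "s' < n" "t < n" for s' t
      unfolding Mm_def using that A cLCc by simp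
    show ?case
    proof (rule iss[OF Mm st, of "F m" "\<lambda>k. F m (Suc k) - Mm *\<^sub>v F m k"])
      show "F m k \<in> carrier_vec n" for k by (rule Fdim)
      show "F m (Suc k) - Mm *\<^sub>v F m k \<in> carrier_vec n" for k using Mm Fdim by simp
      show "F m (Suc k) = Mm *\<^sub>v F m k + (F m (Suc k) - Mm *\<^sub>v F m k)" for k
        by (rule eq_vecI) (use Mm Fdim[of m k] Fdim[of m "Suc k"] in \<open>auto simp: F_def\<close>)
      show "s < n" by (rule s)
      fix s' assume s': "s' < n"
      have u_eq: "(F m (Suc k) - Mm *\<^sub>v F m k) $ s' = - (\<Sum>t<n. cLC $$ (s',t) * (\<Sum>l\<in>{m<..<N}. T $$ (m,l) * F l k $ t))" for k
      proof -
        have "(Mm *\<^sub>v F m k) $ s' = (\<Sum>t<n. (complex_of_real (A $$ (s',t)) + (1 - T $$ (m,m)) * cLC $$ (s',t)) * F m k $ t)"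
          unfolding mv_coord[OF Mm Fdim s'] by (rule sum.cong[OF refl]) (simp add: Mme s')
        moreover have "(F m (Suc k) - Mm *\<^sub>v F m k) $ s' = F m (Suc k) $ s' - (Mm *\<^sub>v F m k) $ s'"
          using Mm s' by simp
        ultimately show ?thesis using Frec[OF mN s', of k] by simp
      qed
      have "(\<lambda>k. \<Sum>t<n. cLC $$ (s',t) * (\<Sum>l\<in>{m<..<N}. T $$ (m,l) * F l k $ t)) \<longlonglongrightarrow> 0"
      proof (rule tendsto_null_sum, rule tendsto_mult_right_zero, rule tendsto_null_sum, rule tendsto_mult_right_zero)
        fix t l assume t: "t \<in> {..<n}" and l: "l \<in> {m<..<N}"
        show "(\<lambda>k. F l k $ t) \<longlonglongrightarrow> 0" using less.hyps[of l t] l t m1 by auto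
      qed
      hence "(\<lambda>k. - (\<Sum>t<n. cLC $$ (s',t) * (\<Sum>l\<in>{m<..<N}. T $$ (m,l) * F l k $ t))) \<longlonglongrightarrow> - 0"
        by (rule tendsto_minus)
      thus "(\<lambda>k. (F m (Suc k) - Mm *\<^sub>v F m k) $ s') \<longlonglongrightarrow> 0" unfolding u_eq by simp
    qed
  qed
  have erep: "complex_of_real (e i k s) = (\<Sum>m<N. P $$ (i,m) * F m k $ s)" if i: "i < N" and s: "s < n" for i k s
  proof -
    have "(\<Sum>m<N. P $$ (i,m) * F m k $ s) = (\<Sum>m<N. \<Sum>i'<N. P $$ (i,m) * (Q $$ (m,i') * complex_of_real (e i' k s)))"
      by (rule sum.cong[OF refl]) (simp add: Fi[OF s] sum_distrib_left)
    also have "\<dots> = (\<Sum>i'<N. \<Sum>m<N. P $$ (i,m) * (Q $$ (m,i') * complex_of_real (e i' k s)))"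
      by (rule sum.swap)
    also have "\<dots> = (\<Sum>i'<N. (\<Sum>m<N. P $$ (i,m) * Q $$ (m,i')) * complex_of_real (e i' k s))"
      by (rule sum.cong[OF refl]) (simp add: sum_distrib_right mult.assoc)
    also have "\<dots> = (\<Sum>i'<N. (if i = i' then 1 else 0) * complex_of_real (e i' k s))"
      by (rule sum.cong[OF refl]) (simp add: PQe i)
    also have "\<dots> = (\<Sum>i'<N. if i = i' then complex_of_real (e i' k s) else 0)"
      by (rule sum.cong[OF refl]) simp
    also have "\<dots> = complex_of_real (e i k s)" using i by simp
    finally show ?thesis by simp
  qed
  have econv: "(\<lambda>k. e i k s - e j k s) \<longlonglongrightarrow> 0" if i: "i < N" and j: "j < N" and s: "s < n" for i j s
  proof -
    have eq: "complex_of_real (e i k s - e j k s) = (\<Sum>m<N. (P $$ (i,m) - P $$ (j,m)) * F m k $ s)" for k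
      using erep[OF i s, of k] erep[OF j s, of k] by (simp add: sum_subtractf left_diff_distrib)
    have "(\<lambda>k. \<Sum>m<N. (P $$ (i,m) - P $$ (j,m)) * F m k $ s) \<longlonglongrightarrow> 0"
    proof (rule tendsto_null_sum)
      fix m assume m: "m \<in> {..<N}"
      show "(\<lambda>k. (P $$ (i,m) - P $$ (j,m)) * F m k $ s) \<longlonglongrightarrow> 0"
      proof (cases "m = 0")
        case True then show ?thesis using Pcol[OF i j] by simp
      next
        case False then show ?thesis using Fconv[of m s] m s by (intro tendsto_mult_right_zero) auto
      qed
    qed
    hence "(\<lambda>k. complex_of_real (e i k s - e j k s)) \<longlonglongrightarrow> complex_of_real 0" unfolding eq by simp
    thus ?thesis by (simp only: tendsto_of_real_iff)
  qed
  show "\<forall>i<N. \<forall>j<N. (\<lambda>k. vnorm (x i k - x j k)) \<longlonglongrightarrow> 0"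
  proof (intro allI impI)
    fix i j assume i: "i < N" and j: "j < N"
    define \<delta> where "\<delta> k = x i k - x j k" for k
    have \<delta>c: "\<delta> k \<in> carrier_vec n" for k unfolding \<delta>_def using xc i j by simp
    define M where "M = cmat (A + B * K)"
    have M: "M \<in> carrier_mat n n" unfolding M_def using A B K by simp
    define y where "y k = map_vec complex_of_real (\<delta> k)" for k
    have yc: "y k \<in> carrier_vec n" for k unfolding y_def using \<delta>c by simp
    have ABK: "A + B * K \<in> carrier_mat n n" using A B K by simp
    have BK: "B * K \<in> carrier_mat n n" using B K by simp
    have real_id: "\<delta> (Suc k) $ s - ((A + B * K) *\<^sub>v \<delta> k) $ s = (\<Sum>t<n. (B * K) $$ (s,t) * (e i k t - e j k t))"
      if s: "s < n" for k s
    proof -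
      have xs: "x i' (Suc k) $ s = (\<Sum>t<n. A $$ (s,t) * x i' k $ t) + (\<Sum>t<n. (B * K) $$ (s,t) * v i' k $ t)"
        if i': "i' < N" for i'
      proof -
        have "(B * K) *\<^sub>v v i' k = B *\<^sub>v (K *\<^sub>v v i' k)" using B K vc[OF i'] by simp
        hence "x i' (Suc k) = A *\<^sub>v x i' k + (B * K) *\<^sub>v v i' k" using xr[OF i'] by simp
        moreover have "dim_row B = n" using B by auto
        ultimately have "x i' (Suc k) $ s = (A *\<^sub>v x i' k) $ s + ((B * K) *\<^sub>v v i' k) $ s" using s A BK by simp
        thus ?thesis unfolding mv_coord[OF A xc[OF i'] s] mv_coord[OF BK vc[OF i'] s] .
      qed
      have "\<delta> (Suc k) $ s = x i (Suc k) $ s - x j (Suc k) $ s" unfolding \<delta>_def using carrier_vecD[OF xc[OF j, of "Suc k"]] s by simp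
      moreover have "((A + B * K) *\<^sub>v \<delta> k) $ s = (\<Sum>t<n. (A $$ (s,t) + (B * K) $$ (s,t)) * (x i k $ t - x j k $ t))"
        unfolding mv_coord[OF ABK \<delta>c s]
      proof (rule sum.cong[OF refl])
        fix t assume "t \<in> {..<n}"
        hence t: "t < n" by simp
        have "(A + B * K) $$ (s,t) = A $$ (s,t) + (B * K) $$ (s,t)" using s t carrier_matD[OF BK] by simp
        moreover have "\<delta> k $ t = x i k $ t - x j k $ t" unfolding \<delta>_def using t carrier_vecD[OF xc[OF j, of k]] by simp
        ultimately show "(A + B * K) $$ (s,t) * \<delta> k $ t = (A $$ (s,t) + (B * K) $$ (s,t)) * (x i k $ t - x j k $ t)" by simp
      qed
      ultimately show ?thesis unfolding xs[OF i] xs[OF j] e_def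
        by (simp only: sum.distrib[symmetric] sum_subtractf[symmetric]) (rule sum.cong[OF refl], simp add: algebra_simps)
    qed
    have yconv: "(\<lambda>k. y k $ s) \<longlonglongrightarrow> 0" if s: "s < n" for s
    proof (rule iss[OF M stabK[folded M_def], of y "\<lambda>k. y (Suc k) - M *\<^sub>v y k"])
      show "y k \<in> carrier_vec n" for k by (rule yc)
      show "y (Suc k) - M *\<^sub>v y k \<in> carrier_vec n" for k using M yc by simp
      show "y (Suc k) = M *\<^sub>v y k + (y (Suc k) - M *\<^sub>v y k)" for k
        by (rule eq_vecI) (use M yc[of k] yc[of "Suc k"] in \<open>auto simp: y_def\<close>)
      show "s < n" by (rule s)
      fix s' assume s': "s' < n"
      have u_eq: "(y (Suc k) - M *\<^sub>v y k) $ s' = (\<Sum>t<n. complex_of_real ((B * K) $$ (s',t)) * complex_of_real (e i k t - e j k t))" for k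
      proof -
        have "(M *\<^sub>v y k) $ s' = (\<Sum>t<n. M $$ (s',t) * y k $ t)" by (rule mv_coord[OF M yc s'])
        also have "\<dots> = (\<Sum>t<n. complex_of_real ((A + B * K) $$ (s',t)) * complex_of_real (\<delta> k $ t))"
        proof (rule sum.cong[OF refl])
          fix t assume "t \<in> {..<n}"
          hence t: "t < n" by simp
          show "M $$ (s',t) * y k $ t = complex_of_real ((A + B * K) $$ (s',t)) * complex_of_real (\<delta> k $ t)"
            unfolding M_def y_def using t s' carrier_matD[OF ABK] carrier_vecD[OF \<delta>c[of k]] by simp
        qed
        also have "\<dots> = complex_of_real (((A + B * K) *\<^sub>v \<delta> k) $ s')"
          unfolding mv_coord[OF ABK \<delta>c s'] by simp
        finally have "(M *\<^sub>v y k) $ s' = complex_of_real (((A + B * K) *\<^sub>v \<delta> k) $ s')" .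
        moreover have "(y (Suc k) - M *\<^sub>v y k) $ s' = y (Suc k) $ s' - (M *\<^sub>v y k) $ s'" using M s' by simp
        moreover have "y (Suc k) $ s' = complex_of_real (\<delta> (Suc k) $ s')" unfolding y_def using carrier_vecD[OF \<delta>c[of "Suc k"]] s' by simp
        ultimately have "(y (Suc k) - M *\<^sub>v y k) $ s' = complex_of_real (\<delta> (Suc k) $ s' - ((A + B * K) *\<^sub>v \<delta> k) $ s')"
          by simp
        thus ?thesis unfolding real_id[OF s'] by simp
      qed
      have "(\<lambda>k. \<Sum>t<n. complex_of_real ((B * K) $$ (s',t)) * complex_of_real (e i k t - e j k t)) \<longlonglongrightarrow> 0"
      proof (rule tendsto_null_sum, rule tendsto_mult_right_zero)
        fix t assume t: "t \<in> {..<n}"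
        have "(\<lambda>k. e i k t - e j k t) \<longlonglongrightarrow> 0" using econv[OF i j] t by simp
        hence "(\<lambda>k. complex_of_real (e i k t - e j k t)) \<longlonglongrightarrow> complex_of_real 0" by (simp only: tendsto_of_real_iff)
        thus "(\<lambda>k. complex_of_real (e i k t - e j k t)) \<longlonglongrightarrow> 0" by simp
      qed
      thus "(\<lambda>k. (y (Suc k) - M *\<^sub>v y k) $ s') \<longlonglongrightarrow> 0" unfolding u_eq .
    qed
    have dconv: "(\<lambda>k. \<delta> k $ s) \<longlonglongrightarrow> 0" if s: "s < n" for s
    proof -
      have "(\<lambda>k. complex_of_real (\<delta> k $ s)) \<longlonglongrightarrow> complex_of_real 0"
        using yconv[OF s] unfolding y_def using carrier_vecD[OF \<delta>c] s by simp
      thus ?thesis by (simp only: tendsto_of_real_iff)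
    qed
    have vn: "vnorm (x i k - x j k) = sqrt (\<Sum>s<n. (\<delta> k $ s)\<^sup>2)" for k
      unfolding vnorm_def \<delta>_def[symmetric] using carrier_vecD[OF \<delta>c[of k]] by (simp add: lessThan_atLeast0)
    have "(\<lambda>k. \<Sum>s<n. (\<delta> k $ s)\<^sup>2) \<longlonglongrightarrow> 0"
    proof (rule tendsto_null_sum)
      fix s assume "s \<in> {..<n}"
      hence "(\<lambda>k. (\<delta> k $ s) ^ 2) \<longlonglongrightarrow> 0 ^ 2" using dconv by (intro tendsto_power) auto
      thus "(\<lambda>k. (\<delta> k $ s)\<^sup>2) \<longlonglongrightarrow> 0" by simp
    qed
    hence "(\<lambda>k. sqrt (\<Sum>s<n. (\<delta> k $ s)\<^sup>2)) \<longlonglongrightarrow> sqrt 0" by (rule tendsto_real_sqrt)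
    thus "(\<lambda>k. vnorm (x i k - x j k)) \<longlonglongrightarrow> 0" unfolding vn by simp
  qed
qed

end
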